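(* Let $a,b$ be non-negative integers and $c=1$ such that the polynomial $x^3-ax^2-bx-c$ has exactly one real root $\eta_1$, and $\eta_1>1$. Then there exists a constant $T$ such that for any positive integers $n,k$ with $k\ge 4$, the number of positive integer sequences $\langle x_i\rangle_{i=1}^k$ satisfying $x_{i+3}=ax_{i+2}+bx_{i+1}+cx_i$ for $1\le i\le k-3$ and terminating at $x_k=n$ is at most \[\left\lceil T\frac{n}{\eta_1^{3k/2}}\right\rceil^2.\]
   Context: A sequence $\langle x_i\rangle_{i=1}^k$ is positive if $x_1,x_2,x_3>0$. *)

theory Defs
  imports Complex_Main
begin

text \<open>Sequences x_1..x_k are lists of length k (0-based: xs!(i-1) = x_i).
  The recurrence x_{i+3} = a x_{i+2} + b x_{i+1} + c x_i for 1 <= i <= k-3.\<close>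
definition rec_seqs :: "int \<Rightarrow> int \<Rightarrow> int \<Rightarrow> nat \<Rightarrow> int \<Rightarrow> int list set" where
  "rec_seqs a b c k n = {xs. length xs = k \<and> (\<forall>i<k. xs ! i > 0)
      \<and> (\<forall>i. i + 3 < k \<longrightarrow> xs ! (i+3) = a * xs ! (i+2) + b * xs ! (i+1) + c * xs ! i)
      \<and> xs ! (k - 1) = n}"

end

theory Submission
  imports Defs
begin

definition Lf :: "real \<Rightarrow> real \<Rightarrow> real \<Rightarrow> real \<Rightarrow> real \<Rightarrow> real" where
  "Lf b e p q r = p + (b + 1/e)*q + e*r"
definition Qf :: "real \<Rightarrow> real \<Rightarrow> real \<Rightarrow> real \<Rightarrow> real" where
  "Qf s t u v = v^2 + s*u*v + t*u^2"
definition Ff :: "real \<Rightarrow> real \<Rightarrow> real \<Rightarrow> real \<Rightarrow> real \<Rightarrow> real" where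
  "Ff a e p q r = Qf (e - a) (1/e) (q - e*p) (r - e*q)"

lemma rel_b: fixes a b e :: real assumes "e > 0" "e^3 = a*e^2 + b*e + 1"
  shows "b = e^2 - a*e - 1/e"
proof -
  have "b*e = e^3 - a*e^2 - 1" using assms(2) by linarith
  then have "b = (e^3 - a*e^2 - 1)/e" using assms(1) by (simp add: field_simps)
  then show ?thesis using assms(1) by (simp add: field_simps power2_eq_square power3_eq_cube)
qed

lemma L_step: fixes a b e :: real assumes "e > 0" "e^3 = a*e^2 + b*e + 1"
  shows "Lf b e q r (a*r + b*q + p) = e * Lf b e p q r"
proof -
  have hb: "b = e^2 - a*e - 1/e" using rel_b assms by blast
  show ?thesis unfolding Lf_def hb using assms(1)
    by (simp add: field_simps power2_eq_square)
qed

lemma F_step: fixes a b e :: real assumes "e > 0" "e^3 = a*e^2 + b*e + 1"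
  shows "Ff a e q r (a*r + b*q + p) = (1/e) * Ff a e p q r"
proof -
  have hb: "b = e^2 - a*e - 1/e" using rel_b assms by blast
  show ?thesis unfolding Ff_def Qf_def hb using assms(1)
    by (simp add: field_simps power2_eq_square)
qed

lemma Q_lower1: fixes s t u v :: real assumes "t > 0" shows "Qf s t u v \<ge> ((4*t - s^2)/4) * u^2"
proof -
  have "Qf s t u v - ((4*t - s^2)/4) * u^2 = (v + s*u/2)^2"
    unfolding Qf_def by (simp add: field_simps power2_eq_square)
  then show ?thesis by (metis diff_ge_0_iff_ge zero_le_power2)
qed

lemma Q_lower2: fixes s t u v :: real assumes "t > 0" shows "Qf s t u v \<ge> ((4*t - s^2)/(4*t)) * v^2"
proof -
  have "Qf s t u v - ((4*t - s^2)/(4*t)) * v^2 = t * (u + s*v/(2*t))^2"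
    unfolding Qf_def using assms by (simp add: field_simps power2_eq_square)
  then show ?thesis using assms by (metis diff_ge_0_iff_ge zero_le_power2 mult_nonneg_nonneg less_imp_le)
qed

lemma L_iter: fixes x :: "nat \<Rightarrow> real" and a b e :: real
  assumes "e > 0" "e^3 = a*e^2 + b*e + 1"
    and rec: "\<And>i. i+3 < k \<Longrightarrow> x(i+3) = a*x(i+2) + b*x(i+1) + x i"
  shows "m+2 < k \<Longrightarrow> Lf b e (x m) (x (m+1)) (x (m+2)) = e^m * Lf b e (x 0) (x 1) (x 2)"
proof (induction m)
  case 0 then show ?case by (simp add: numeral_2_eq_2)
next
  case (Suc m)
  have r: "x (m+3) = a*x(m+2) + b*x(m+1) + x m" using rec Suc.prems by simp
  have "Lf b e (x (Suc m)) (x (Suc m+1)) (x (Suc m+2)) = Lf b e (x (m+1)) (x (m+2)) (a*x(m+2) + b*x(m+1) + x m)"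
    using r by (simp add: numeral_3_eq_3)
  also have "\<dots> = e * Lf b e (x m) (x (m+1)) (x (m+2))" using L_step assms(1,2) by blast
  also have "\<dots> = e^(Suc m) * Lf b e (x 0) (x 1) (x 2)" using Suc by simp
  finally show ?case .
qed

lemma F_iter: fixes x :: "nat \<Rightarrow> real" and a b e :: real
  assumes "e > 0" "e^3 = a*e^2 + b*e + 1"
    and rec: "\<And>i. i+3 < k \<Longrightarrow> x(i+3) = a*x(i+2) + b*x(i+1) + x i"
  shows "m+2 < k \<Longrightarrow> Ff a e (x m) (x (m+1)) (x (m+2)) = (1/e)^m * Ff a e (x 0) (x 1) (x 2)"
proof (induction m)
  case 0 then show ?case by (simp add: numeral_2_eq_2)
next
  case (Suc m)
  have r: "x (m+3) = a*x(m+2) + b*x(m+1) + x m" using rec Suc.prems by simp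
  have "Ff a e (x (Suc m)) (x (Suc m+1)) (x (Suc m+2)) = Ff a e (x (m+1)) (x (m+2)) (a*x(m+2) + b*x(m+1) + x m)"
    using r by (simp add: numeral_3_eq_3)
  also have "\<dots> = (1/e) * Ff a e (x m) (x (m+1)) (x (m+2))" using F_step assms(1,2) by blast
  also have "\<dots> = (1/e)^(Suc m) * Ff a e (x 0) (x 1) (x 2)" using Suc by simp
  finally show ?case .
qed

lemma F_bound0: fixes a b e p q r :: real
  assumes "e > 1" "b \<ge> 0" "p > 0" "q > 0" "r > 0"
  shows "Ff a e p q r \<le> (1 + \<bar>e-a\<bar> + 1/e)*(1+e)^4 * (Lf b e p q r)^2"
proof -
  define L where "L = Lf b e p q r"
  define G where "G = (1+e)^2"
  define u where "u = q - e*p"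
  define v where "v = r - e*q"
  have bq: "(b + 1/e)*q \<ge> q/e" using assms by (simp add: field_simps)
  have bq0: "(b + 1/e)*q \<ge> 0" using assms by simp
  have pL: "p \<le> L" unfolding L_def Lf_def using assms bq0 by simp
  have qL: "q \<le> e*L"
  proof -
    have "e*r > 0" using assms by simp
    then have "q/e \<le> L" unfolding L_def Lf_def using assms bq by linarith
    then show ?thesis using assms by (simp add: field_simps)
  qed
  have rL: "r \<le> L"
  proof -
    have "e*r \<le> L" unfolding L_def Lf_def using assms bq0 by simp
    moreover have "r \<le> e*r" using assms by simp
    ultimately show ?thesis by linarith
  qed
  have L0: "L \<ge> 0" using pL assms by linarith
  have Gx: "G = 1 + 2*e + e^2" unfolding G_def by (simp add: power2_eq_square algebra_simps)
  have "e^2 \<ge> 0" by simp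
  then have G1: "2*e \<le> G" and G2: "1 + e^2 \<le> G" using Gx assms(1) by linarith+
  have uB: "\<bar>u\<bar> \<le> G*L"
  proof -
    have "e*p > 0" using assms by simp
    then have "\<bar>u\<bar> \<le> q + e*p" unfolding u_def using assms by linarith
    also have "\<dots> \<le> e*L + e*L"
    proof -
      have "e*p \<le> e*L" using pL assms by simp
      then show ?thesis using qL by linarith
    qed
    also have "\<dots> = (2*e)*L" by simp
    also have "\<dots> \<le> G*L" using G1 L0 by (simp add: mult_right_mono)
    finally show ?thesis .
  qed
  have vB: "\<bar>v\<bar> \<le> G*L"
  proof -
    have "e*q > 0" using assms by simp
    then have "\<bar>v\<bar> \<le> r + e*q" unfolding v_def using assms by linarith
    also have "\<dots> \<le> L + e*(e*L)"
    proof -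
      have "e*q \<le> e*(e*L)" using qL assms by simp
      then show ?thesis using rL by linarith
    qed
    also have "\<dots> = (1+e^2)*L" by (simp add: power2_eq_square algebra_simps)
    also have "\<dots> \<le> G*L" using G2 L0 by (simp add: mult_right_mono)
    finally show ?thesis .
  qed
  have GL0: "G*L \<ge> 0" using uB by linarith
  have u2: "u^2 \<le> (G*L)^2" using uB GL0 abs_le_square_iff[of u "G*L"] by simp
  have v2: "v^2 \<le> (G*L)^2" using vB GL0 abs_le_square_iff[of v "G*L"] by simp
  have uv: "\<bar>u*v\<bar> \<le> (G*L)^2"
    using mult_mono[OF uB vB] GL0 by (simp add: abs_mult power2_eq_square)
  have "Ff a e p q r = v^2 + (e-a)*u*v + (1/e)*u^2" unfolding Ff_def Qf_def u_def v_def by simp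
  also have "\<dots> \<le> (G*L)^2 + \<bar>e-a\<bar>*(G*L)^2 + (1/e)*(G*L)^2"
  proof -
    have "(e-a)*u*v \<le> \<bar>e-a\<bar>*(G*L)^2"
    proof -
      have "(e-a)*u*v \<le> \<bar>(e-a)*(u*v)\<bar>" by (simp add: mult.assoc)
      also have "\<dots> = \<bar>e-a\<bar>*\<bar>u*v\<bar>" by (simp add: abs_mult)
      also have "\<dots> \<le> \<bar>e-a\<bar>*(G*L)^2" using uv by (simp add: mult_left_mono)
      finally show ?thesis .
    qed
    moreover have "(1/e)*u^2 \<le> (1/e)*(G*L)^2" using u2 assms by (simp add: divide_right_mono)
    ultimately show ?thesis using v2 by linarith
  qed
  also have "\<dots> = (1 + \<bar>e-a\<bar> + 1/e)*(1+e)^4 * L^2"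
    unfolding G_def by (simp add: power_mult_distrib algebra_simps flip: power_mult)
  finally show ?thesis unfolding L_def .
qed

lemma seq_bound: fixes x :: "nat \<Rightarrow> real" and a b e :: real
  assumes "e > 1" "b \<ge> 0" "e^3 = a*e^2 + b*e + 1"
    and rec: "\<And>i. i+3 < k \<Longrightarrow> x(i+3) = a*x(i+2) + b*x(i+1) + x i"
    and pos: "\<And>i. i < k \<Longrightarrow> x i > 0" and mk: "m + 2 < k"
  shows "Ff a e (x m) (x (m+1)) (x (m+2)) * e^(3*m) \<le> (1 + \<bar>e-a\<bar> + 1/e)*(1+e)^4 * (Lf b e (x m) (x (m+1)) (x (m+2)))^2"
proof -
  define C where "C = (1 + \<bar>e-a\<bar> + 1/e)*(1+e)^4"
  have e0: "e > 0" using assms by simp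
  have F: "Ff a e (x m) (x (m+1)) (x (m+2)) = (1/e)^m * Ff a e (x 0) (x 1) (x 2)"
    using F_iter[OF e0 assms(3) rec mk] by blast
  have L: "Lf b e (x m) (x (m+1)) (x (m+2)) = e^m * Lf b e (x 0) (x 1) (x 2)"
    using L_iter[OF e0 assms(3) rec mk] by blast
  have F0: "Ff a e (x 0) (x 1) (x 2) \<le> C * (Lf b e (x 0) (x 1) (x 2))^2"
    unfolding C_def using F_bound0[OF assms(1,2)] pos mk by simp
  have "Ff a e (x m) (x (m+1)) (x (m+2)) * e^(3*m) = (e^m)^2 * Ff a e (x 0) (x 1) (x 2)"
  proof -
    have "(1/e)^m * e^(3*m) = (e^m)^2" using e0
      by (simp add: power_mult power_one_over field_simps flip: power_add) (simp add: numeral_eq_Suc)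
    then show ?thesis unfolding F by (metis mult.commute mult.left_commute)
  qed
  also have "\<dots> \<le> (e^m)^2 * (C * (Lf b e (x 0) (x 1) (x 2))^2)"
    using F0 by (simp add: mult_left_mono)
  also have "\<dots> = C * (Lf b e (x m) (x (m+1)) (x (m+2)))^2" unfolding L by (simp add: power_mult_distrib)
  finally show ?thesis unfolding C_def .
qed

fun gen :: "int \<Rightarrow> int \<Rightarrow> int \<Rightarrow> int \<Rightarrow> int \<Rightarrow> nat \<Rightarrow> int" where
  "gen a b p q r 0 = p"
| "gen a b p q r (Suc 0) = q"
| "gen a b p q r (Suc (Suc 0)) = r"
| "gen a b p q r (Suc (Suc (Suc i))) = a * gen a b p q r (Suc (Suc i)) + b * gen a b p q r (Suc i) + gen a b p q r i"

lemma gen_lin: "gen a b p q r i = p * gen a b 1 0 0 i + q * gen a b 0 1 0 i + r * gen a b 0 0 1 i"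
  by (induction a b p q r i rule: gen.induct) (simp_all add: algebra_simps)

lemma gen_nonneg: "a \<ge> 0 \<Longrightarrow> b \<ge> 0 \<Longrightarrow> p \<ge> 0 \<Longrightarrow> q \<ge> 0 \<Longrightarrow> r \<ge> 0 \<Longrightarrow> gen a b p q r i \<ge> 0"
  by (induction a b p q r i rule: gen.induct) simp_all

lemma gen_bound: assumes "a \<ge> 0" "b \<ge> 0" "0 \<le> p" "p \<le> N" "0 \<le> q" "q \<le> N" "0 \<le> r" "r \<le> N"
  shows "gen a b p q r i \<le> N * (1+a+b)^i"
proof (induction i rule: less_induct)
  case (less i)
  have N0: "N \<ge> 0" using assms by linarith
  have mono: "N * (1+a+b)^j \<le> N * (1+a+b)^l" if "j \<le> l" for j l
    using that N0 assms by (simp add: mult_left_mono power_increasing)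
  show ?case
  proof (cases i)
    case 0 then show ?thesis using assms by simp
  next
    case (Suc i1) note i1 = this
    show ?thesis
    proof (cases i1)
      case 0 then show ?thesis using assms i1 mono[of 0 1] by simp
    next
      case (Suc i2) note i2 = this
      show ?thesis
      proof (cases i2)
        case 0 then show ?thesis using assms i1 i2 mono[of 0 2] by (simp add: numeral_2_eq_2)
      next
        case (Suc j)
        have i: "i = Suc (Suc (Suc j))" using i1 i2 Suc by simp
        have h2: "gen a b p q r (Suc (Suc j)) \<le> N * (1+a+b)^(Suc (Suc j))" using less.IH[of "Suc (Suc j)"] i by (simp del: power_Suc)
        have h1: "gen a b p q r (Suc j) \<le> N * (1+a+b)^(Suc (Suc j))" using less[of "Suc j"] i mono[of "Suc j" "Suc (Suc j)"] by simp
        have h0: "gen a b p q r j \<le> N * (1+a+b)^(Suc (Suc j))" using less[of j] i mono[of j "Suc (Suc j)"] by simp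
        have "gen a b p q r i = a * gen a b p q r (Suc (Suc j)) + b * gen a b p q r (Suc j) + gen a b p q r j"
          using i by simp
        also have "\<dots> \<le> a * (N * (1+a+b)^(Suc (Suc j))) + b * (N * (1+a+b)^(Suc (Suc j))) + N * (1+a+b)^(Suc (Suc j))"
          using h0 h1 h2 assms by (intro add_mono mult_left_mono) auto
        also have "\<dots> = N * (1+a+b)^i" using i by (simp add: algebra_simps)
        finally show ?thesis .
      qed
    qed
  qed
qed

lemma seq_gen: assumes "xs \<in> rec_seqs a b 1 k n" "i < k"
  shows "xs ! i = gen a b (xs!0) (xs!1) (xs!2) i"
  using assms(2)
proof (induction i rule: less_induct)
  case (less i)
  have rec: "\<And>j. j + 3 < k \<Longrightarrow> xs ! (j+3) = a * xs ! (j+2) + b * xs ! (j+1) + xs ! j"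
    using assms(1) unfolding rec_seqs_def by auto
  show ?case
  proof (cases "i < 3")
    case True then show ?thesis by (auto simp: less_Suc_eq numeral_3_eq_3 numeral_2_eq_2)
  next
    case False
    then obtain j where i: "i = Suc (Suc (Suc j))" 
    proof -
      have "i = Suc (Suc (Suc (i - 3)))" using False by simp
      then show ?thesis using that by blast
    qed
    have "xs ! i = a * xs ! (j+2) + b * xs ! (j+1) + xs ! j" using rec[of j] less.prems i by (simp add: numeral_3_eq_3)
    also have "\<dots> = gen a b (xs!0) (xs!1) (xs!2) i"
      using less.IH[of "j+2"] less.IH[of "j+1"] less.IH[of j] less.prems i by simp
    finally show ?thesis .
  qed
qed

lemma infinite_case:
  assumes ab: "a \<ge> 0" "b \<ge> 0" and xs: "xs \<in> rec_seqs a b 1 k n"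
    and pqr: "p \<ge> 0" "q \<ge> 0" "r \<ge> 0" and z: "gen a b p q r (k-1) = 0"
    and i0: "i0 < k" "gen a b p q r i0 > 0"
  shows "infinite (rec_seqs a b 1 k n)"
proof -
  define g where "g = gen a b p q r"
  define f where "f t = map (\<lambda>i. xs!i + int t * g i) [0..<k]" for t
  have xsp: "length xs = k" "\<And>i. i < k \<Longrightarrow> xs!i > 0"
    "\<And>i. i + 3 < k \<Longrightarrow> xs ! (i+3) = a * xs ! (i+2) + b * xs ! (i+1) + 1 * xs ! i"
    "xs ! (k-1) = n" using xs unfolding rec_seqs_def by auto
  have g0: "g i \<ge> 0" for i unfolding g_def using gen_nonneg ab pqr by blast
  have grec: "g (i+3) = a * g (i+2) + b * g (i+1) + g i" for i
    unfolding g_def by (simp add: numeral_3_eq_3 numeral_2_eq_2)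
  have fS: "f t \<in> rec_seqs a b 1 k n" for t
  proof -
    have "f t ! i > 0" if "i < k" for i
    proof -
      have "int t * g i \<ge> 0" using g0 by simp
      then show ?thesis using xsp(2)[OF that] that unfolding f_def by simp
    qed
    moreover have "f t ! (i+3) = a * f t ! (i+2) + b * f t ! (i+1) + 1 * f t ! i" if "i+3 < k" for i
      using that xsp(3)[OF that] grec[of i] unfolding f_def by (simp add: algebra_simps)
    moreover have "f t ! (k-1) = n" using xsp(4) z i0 unfolding f_def g_def by simp
    ultimately show ?thesis unfolding rec_seqs_def f_def by simp
  qed
  have "inj f"
  proof (rule injI)
    fix s t assume "f s = f t"
    then have "f s ! i0 = f t ! i0" by simp
    then have "int s * g i0 = int t * g i0" using i0 unfolding f_def by simp
    then show "s = t" using i0 unfolding g_def by simp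
  qed
  then have "infinite (range f)" using finite_imageD infinite_UNIV_nat by blast
  moreover have "range f \<subseteq> rec_seqs a b 1 k n" using fS by auto
  ultimately show ?thesis using infinite_super by blast
qed

lemma small_case:
  assumes ab: "a \<ge> 0" "b \<ge> 0" and xs: "xs \<in> rec_seqs a b 1 k n"
    and fin: "finite (rec_seqs a b 1 k n)" and k: "k \<ge> 3" and i: "i < k"
  shows "xs ! i \<le> n * (1+a+b)^i"
proof -
  have xsp: "\<And>i. i < k \<Longrightarrow> xs!i > 0" "xs ! (k-1) = n" using xs unfolding rec_seqs_def by auto
  define E0 where "E0 = gen a b 1 0 0 (k-1)"
  define E1 where "E1 = gen a b 0 1 0 (k-1)"
  define E2 where "E2 = gen a b 0 0 1 (k-1)"
  have E0: "E0 \<ge> 1"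
  proof -
    have "E0 \<ge> 0" unfolding E0_def using gen_nonneg ab by simp
    moreover have "E0 \<noteq> 0" using infinite_case[OF ab xs, of 1 0 0 0] fin k unfolding E0_def by auto
    ultimately show ?thesis by simp
  qed
  have E1: "E1 \<ge> 1"
  proof -
    have "E1 \<ge> 0" unfolding E1_def using gen_nonneg ab by simp
    moreover have "E1 \<noteq> 0" using infinite_case[OF ab xs, of 0 1 0 1] fin k unfolding E1_def by auto
    ultimately show ?thesis by simp
  qed
  have E2: "E2 \<ge> 1"
  proof -
    have "E2 \<ge> 0" unfolding E2_def using gen_nonneg ab by simp
    moreover have "E2 \<noteq> 0" using infinite_case[OF ab xs, of 0 0 1 2] fin k unfolding E2_def
      by (auto simp: numeral_2_eq_2)
    ultimately show ?thesis by simp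
  qed
  have n: "n = xs!0 * E0 + xs!1 * E1 + xs!2 * E2"
    using seq_gen[OF xs, of "k-1"] gen_lin[of a b "xs!0" "xs!1" "xs!2" "k-1"] xsp(2) k
    unfolding E0_def E1_def E2_def by simp
  have p0: "xs!0 > 0" "xs!1 > 0" "xs!2 > 0" using xsp(1) k by auto
  have m0: "xs!0 * E0 \<ge> xs!0" "xs!1 * E1 \<ge> xs!1" "xs!2 * E2 \<ge> xs!2"
    using p0 E0 E1 E2 by simp_all
  have "xs!0 * E0 \<ge> 0" "xs!1 * E1 \<ge> 0" "xs!2 * E2 \<ge> 0" using m0 p0 by linarith+
  then have bnd: "xs!0 \<le> n" "xs!1 \<le> n" "xs!2 \<le> n" using n m0 by linarith+
  have "xs ! i = gen a b (xs!0) (xs!1) (xs!2) i" using seq_gen[OF xs i] .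
  also have "\<dots> \<le> n * (1+a+b)^i" using gen_bound ab bnd p0 by (meson less_imp_le)
  finally show ?thesis .
qed

lemma card_int_interval: fixes w al :: real assumes "w \<ge> 0"
  shows "finite {u::int. al \<le> of_int u \<and> of_int u \<le> al + w}"
    "card {u::int. al \<le> of_int u \<and> of_int u \<le> al + w} \<le> nat \<lfloor>w\<rfloor> + 1"
proof -
  have sub: "{u::int. al \<le> of_int u \<and> of_int u \<le> al + w} \<subseteq> {\<lceil>al\<rceil> .. \<lceil>al\<rceil> + \<lfloor>w\<rfloor>}"
  proof
    fix u assume "u \<in> {u::int. al \<le> of_int u \<and> of_int u \<le> al + w}"
    then have h: "al \<le> of_int u" "of_int u \<le> al + w" by auto
    have "\<lceil>al\<rceil> \<le> u" using h(1) by (simp add: ceiling_le_iff)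
    moreover have "u \<le> \<lceil>al\<rceil> + \<lfloor>w\<rfloor>"
    proof -
      have "of_int u - of_int \<lceil>al\<rceil> \<le> w" using h(2) le_of_int_ceiling[of al] by linarith
      then have "u - \<lceil>al\<rceil> \<le> \<lfloor>w\<rfloor>" by (metis le_floor_iff of_int_diff)
      then show ?thesis by linarith
    qed
    ultimately show "u \<in> {\<lceil>al\<rceil> .. \<lceil>al\<rceil> + \<lfloor>w\<rfloor>}" by simp
  qed
  then show "finite {u::int. al \<le> of_int u \<and> of_int u \<le> al + w}" using finite_subset by blast
  have "card {u::int. al \<le> of_int u \<and> of_int u \<le> al + w} \<le> card {\<lceil>al\<rceil> .. \<lceil>al\<rceil> + \<lfloor>w\<rfloor>}"
    using sub by (intro card_mono) auto
  also have "\<dots> = nat (\<lfloor>w\<rfloor> + 1)" by simp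
  also have "\<dots> = nat \<lfloor>w\<rfloor> + 1" using assms by (simp add: nat_add_distrib)
  finally show "card {u::int. al \<le> of_int u \<and> of_int u \<le> al + w} \<le> nat \<lfloor>w\<rfloor> + 1" .
qed

lemma card_pairs: fixes e R c :: real and A :: "(int \<times> int) set"
  assumes e: "e > 0" and R: "R \<ge> 0"
    and A: "\<And>u v. (u,v) \<in> A \<Longrightarrow> \<bar>c - e * of_int v\<bar> \<le> R \<and> \<bar>of_int v - e * of_int u\<bar> \<le> R"
  shows "card A \<le> (nat \<lfloor>2*R/e\<rfloor> + 1)^2"
proof -
  define w where "w = 2*R/e"
  have w0: "w \<ge> 0" unfolding w_def using e R by simp
  define V where "V = {v::int. (c-R)/e \<le> of_int v \<and> of_int v \<le> (c-R)/e + w}"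
  define U where "U v = {u::int. (of_int v-R)/e \<le> of_int u \<and> of_int u \<le> (of_int v-R)/e + w}" for v :: int
  have sub: "A \<subseteq> (\<lambda>(v,u). (u,v)) ` Sigma V U"
  proof
    fix x assume "x \<in> A"
    then obtain u v where x: "x = (u,v)" and h: "\<bar>c - e * of_int v\<bar> \<le> R" "\<bar>of_int v - e * of_int u\<bar> \<le> R"
      using A by (metis surj_pair)
    have ww: "(z-R)/e + w = (z+R)/e" for z unfolding w_def using e by (simp add: field_simps)
    have "c - R \<le> e * of_int v" "e * of_int v \<le> c + R" using h(1) by (simp_all add: abs_le_iff)
    then have "(c-R)/e \<le> of_int v" "of_int v \<le> (c-R)/e + w" unfolding ww using e
      by (simp_all add: pos_le_divide_eq pos_divide_le_eq mult.commute)
    moreover have "of_int v - R \<le> e * of_int u" "e * of_int u \<le> of_int v + R" using h(2) by (simp_all add: abs_le_iff)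
    then have "(of_int v-R)/e \<le> of_int u" "of_int u \<le> (of_int v-R)/e + w" unfolding ww using e
      by (simp_all add: pos_le_divide_eq pos_divide_le_eq mult.commute)
    ultimately have "(v,u) \<in> Sigma V U" unfolding V_def U_def by simp
    then show "x \<in> (\<lambda>(v,u). (u,v)) ` Sigma V U" using x by force
  qed
  have fV: "finite V" and cV: "card V \<le> nat \<lfloor>w\<rfloor> + 1" unfolding V_def using card_int_interval[OF w0] by auto
  have fU: "finite (U v)" and cU: "card (U v) \<le> nat \<lfloor>w\<rfloor> + 1" for v unfolding U_def using card_int_interval[OF w0] by auto
  have "card A \<le> card ((\<lambda>(v,u). (u,v)) ` Sigma V U)"
    using sub fV fU by (intro card_mono) auto
  also have "\<dots> \<le> card (Sigma V U)" by (rule card_image_le) (use fV fU in auto)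
  also have "\<dots> = (\<Sum>v\<in>V. card (U v))" using fV fU by (simp add: card_SigmaI)
  also have "\<dots> \<le> card V * (nat \<lfloor>w\<rfloor> + 1)" using cU sum_bounded_above[of V "\<lambda>v. card (U v)" "nat \<lfloor>w\<rfloor> + 1"] by simp
  also have "\<dots> \<le> (nat \<lfloor>w\<rfloor> + 1) * (nat \<lfloor>w\<rfloor> + 1)" using cV by (rule mult_right_mono) simp
  finally show ?thesis unfolding w_def by (simp add: power2_eq_square)
qed


lemma inj_last2: assumes "k \<ge> 3"
  shows "inj_on (\<lambda>xs. (xs!(k-3), xs!(k-2))) (rec_seqs a b 1 k n)"
proof (rule inj_onI)
  fix xs zs assume xs: "xs \<in> rec_seqs a b 1 k n" and zs: "zs \<in> rec_seqs a b 1 k n"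
    and eq: "(xs!(k-3), xs!(k-2)) = (zs!(k-3), zs!(k-2))"
  have px: "length xs = k" "\<And>i. i + 3 < k \<Longrightarrow> xs ! (i+3) = a * xs ! (i+2) + b * xs ! (i+1) + 1 * xs ! i"
    "xs ! (k-1) = n" using xs unfolding rec_seqs_def by auto
  have pz: "length zs = k" "\<And>i. i + 3 < k \<Longrightarrow> zs ! (i+3) = a * zs ! (i+2) + b * zs ! (i+1) + 1 * zs ! i"
    "zs ! (k-1) = n" using zs unfolding rec_seqs_def by auto
  have main: "j < k \<Longrightarrow> xs!(k-1-j) = zs!(k-1-j)" for j
  proof (induction j rule: less_induct)
    case (less j)
    show ?case
    proof (cases "j < 3")
      case True
      then have "j = 0 \<or> j = 1 \<or> j = 2" by auto
      moreover have "k-1-1 = k-2" "k-1-2 = k-3" "k-1-0 = k-1" by simp_all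
      ultimately show ?thesis using eq px(3) pz(3) by (elim disjE) simp_all
    next
      case False
      define i where "i = k-1-j"
      have i3: "i + 3 < k" using False less.prems unfolding i_def by simp
      have e3: "i+3 = k-1-(j-3)" "i+2 = k-1-(j-2)" "i+1 = k-1-(j-1)" using False less.prems unfolding i_def by auto
      have "xs!(k-1-(j-3)) = zs!(k-1-(j-3))" by (rule less.IH) (use False less.prems in linarith)+
      moreover have "xs!(k-1-(j-2)) = zs!(k-1-(j-2))" by (rule less.IH) (use False less.prems in linarith)+
      moreover have "xs!(k-1-(j-1)) = zs!(k-1-(j-1))" by (rule less.IH) (use False less.prems in linarith)+
      ultimately have "xs!(i+3) = zs!(i+3)" "xs!(i+2) = zs!(i+2)" "xs!(i+1) = zs!(i+1)"
        unfolding e3 by simp_all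
      then have "xs ! i = zs ! i" using px(2)[OF i3] pz(2)[OF i3] by simp
      then show ?thesis unfolding i_def .
    qed
  qed
  show "xs = zs"
  proof (rule nth_equalityI)
    show "length xs = length zs" using px pz by simp
    fix i assume "i < length xs"
    then have "i < k" using px by simp
    then have "i = k-1-(k-1-i)" "k-1-i < k" by auto
    then show "xs ! i = zs ! i" using main by metis
  qed
qed

lemma final_arith: fixes w :: real assumes "w > 0"
  shows "real ((nat \<lfloor>w\<rfloor> + 1)^2) \<le> (real_of_int \<lceil>2*w\<rceil>)^2"
proof -
  have f0: "\<lfloor>w\<rfloor> \<ge> 0" using assms by simp
  have l: "real (nat \<lfloor>w\<rfloor> + 1) = of_int \<lfloor>w\<rfloor> + 1" using f0 by simp
  have "of_int \<lfloor>w\<rfloor> + 1 \<le> real_of_int \<lceil>2*w\<rceil>"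
  proof (cases "w < 1")
    case True
    then have "\<lfloor>w\<rfloor> = 0" using assms by (simp add: floor_eq_iff)
    moreover have "\<lceil>2*w\<rceil> \<ge> 1" using assms by (simp add: le_ceiling_iff)
    ultimately show ?thesis by simp
  next
    case False
    have "of_int \<lfloor>w\<rfloor> + 1 \<le> w + 1" by simp
    also have "\<dots> \<le> 2*w" using False by simp
    also have "\<dots> \<le> real_of_int \<lceil>2*w\<rceil>" by simp
    finally show ?thesis .
  qed
  moreover have "0 \<le> of_int \<lfloor>w\<rfloor> + (1::real)" using f0 by simp
  ultimately have "(of_int \<lfloor>w\<rfloor> + (1::real))^2 \<le> (real_of_int \<lceil>2*w\<rceil>)^2"
    by (rule power_mono)
  then show ?thesis using l by (simp only: of_nat_power)
qed


lemma disc_pos: fixes A B e :: real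
  assumes e1: "e > 1" and A: "A \<ge> 0" and B: "B \<ge> 0"
    and S: "{x::real. x ^ 3 - A * x ^ 2 - B * x - 1 = 0} = {e}"
  shows "4*(1/e) - (e-A)^2 > 0"
proof (rule ccontr)
  define s where "s = e - A"
  define t where "t = 1/(e::real)"
  assume "\<not> 4*(1/e) - (e-A)^2 > 0"
  then have d: "s^2 - 4*t \<ge> 0" unfolding s_def t_def by simp
  have rel: "e^3 = A*e^2 + B*e + 1" using S by auto
  have hb: "B = e^2 - A*e - 1/e" using rel_b[of e A B] rel e1 by simp
  define r where "r = sqrt (s^2 - 4*t)"
  have r2: "r^2 = s^2 - 4*t" unfolding r_def using d by simp
  define x0 where "x0 = (-s + r)/2"
  have q0: "x0^2 + s*x0 + t = 0"
  proof -
    have "x0^2 + s*x0 + t = (r^2 - s^2)/4 + t" unfolding x0_def by (simp add: power2_eq_square field_simps)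
    then show ?thesis using r2 by simp
  qed
  have fac: "x^3 - A*x^2 - B*x - 1 = (x - e)*(x^2 + s*x + t)" for x
    unfolding hb s_def t_def using e1 by (simp add: field_simps power2_eq_square power3_eq_cube)
  have "x0 \<in> {x::real. x ^ 3 - A * x ^ 2 - B * x - 1 = 0}" using fac[of x0] q0 by simp
  then have "x0 = e" using S by auto
  then have q1: "e^2 + s*e + t = 0" using q0 by simp
  have "e*(e^2 + s*e + t) = 2*e^3 - A*e^2 + 1" unfolding s_def t_def using e1
    by (simp add: field_simps power2_eq_square power3_eq_cube)
  also have "\<dots> = A*e^2 + 2*B*e + 3" using rel by simp
  moreover have "A*e^2 + 2*B*e + 3 > 0"
  proof -
    have "A*e^2 \<ge> 0" "B*e \<ge> 0" using A B e1 by simp_all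
    then show ?thesis by linarith
  qed
  ultimately show False using q1 by simp
qed


lemma large_bound: fixes d C K E F L y :: real
  assumes "d > 0" "C > 0" "K > 0" "16*K^2*C/d < E" "d*y^2 \<le> F" "F*E \<le> C*L^2" "L \<ge> 0"
  shows "4*K*\<bar>y\<bar> \<le> L"
proof -
  have p: "16*K^2*C/d > 0" using assms by simp
  have E0: "E > 0" using p assms(4) by linarith
  have y0: "d*y^2 \<ge> 0" using assms by simp
  have "(16*K^2*C/d) * (d*y^2) \<le> E * (d*y^2)" using mult_right_mono[OF less_imp_le[OF assms(4)] y0] .
  also have "\<dots> \<le> F*E" using mult_right_mono[OF assms(5) less_imp_le[OF E0]] by (simp add: mult.commute)
  also have "\<dots> \<le> C*L^2" by (rule assms(6))
  finally have 1: "(16*K^2*C/d) * (d*y^2) \<le> C*L^2" .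
  have "(16*K^2*C/d) * (d*y^2) = C * (16*K^2*y^2)" using assms(1) by (simp add: field_simps)
  with 1 have "C * (16*K^2*y^2) \<le> C * L^2" by simp
  then have "16*K^2*y^2 \<le> L^2" using assms(2) by simp
  moreover have "(4*K*\<bar>y\<bar>)^2 = 16*K^2*y^2" by (simp add: power_mult_distrib)
  ultimately have "(4*K*\<bar>y\<bar>)^2 \<le> L^2" by simp
  then show ?thesis using assms(7) by (rule power2_le_imp_le)
qed

theorem theorem6:
  fixes a b c :: nat and \<eta> :: real
  assumes "c = 1"
    and "{x::real. x ^ 3 - real a * x ^ 2 - real b * x - real c = 0} = {\<eta>}"
    and "\<eta> > 1"
  shows "\<exists>T::real. \<forall>n k :: nat. n > 0 \<longrightarrow> k \<ge> 4 \<longrightarrow>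
           real (card (rec_seqs (int a) (int b) (int c) k (int n)))
             \<le> (real_of_int \<lceil>T * real n / \<eta> powr (3 * real k / 2)\<rceil>) ^ 2"
proof -
  define A where "A = real a"
  define B where "B = real b"
  define e where "e = \<eta>"
  have e1: "e > 1" using assms(3) unfolding e_def .
  have e0: "e > 0" using e1 by simp
  have A0: "A \<ge> 0" and B0: "B \<ge> 0" unfolding A_def B_def by simp_all
  have Sr: "{x::real. x ^ 3 - A * x ^ 2 - B * x - 1 = 0} = {e}"
    using assms(1,2) unfolding A_def B_def e_def by simp
  have rel: "e^3 = A*e^2 + B*e + 1" using Sr by auto
  define D where "D = 4*(1/e) - (e-A)^2"
  have D0: "D > 0" unfolding D_def using disc_pos[OF e1 A0 B0 Sr] .
  define d where "d = min (D/4) (D/(4*(1/e)))"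
  have d0: "d > 0" unfolding d_def using D0 e0 by simp
  have hQ1: "d*u^2 \<le> Qf (e-A) (1/e) u v" for u v
  proof -
    have "d \<le> D/4" unfolding d_def by (rule min.cobounded1)
    then have "d*u^2 \<le> (D/4)*u^2" by (rule mult_right_mono) simp
    also have "\<dots> \<le> Qf (e-A) (1/e) u v" using Q_lower1[where s="e-A" and t="1/e" and u=u and v=v] e0 unfolding D_def by simp
    finally show ?thesis .
  qed
  have hQ2: "d*v^2 \<le> Qf (e-A) (1/e) u v" for u v
  proof -
    have "d \<le> D/(4*(1/e))" unfolding d_def by (rule min.cobounded2)
    then have "d*v^2 \<le> (D/(4*(1/e)))*v^2" by (rule mult_right_mono) simp
    also have "\<dots> \<le> Qf (e-A) (1/e) u v" using Q_lower2[where s="e-A" and t="1/e" and u=u and v=v] e0 unfolding D_def by simp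
    finally show ?thesis .
  qed
  define l2 where "l2 = B + 1/e"
  have l20: "l2 \<ge> 0" unfolding l2_def using B0 e0 by simp
  define K where "K = 1 + l2 + e"
  have K0: "K > 0" unfolding K_def using l20 e0 by simp
  define C where "C = (1 + \<bar>e-A\<bar> + 1/e)*(1+e)^4"
  have C0: "C > 0" unfolding C_def using e0 by (simp add: add_pos_nonneg)
  obtain m0 where m0: "16*K^2*C/d < e^m0" using real_arch_pow[OF e1] by blast
  define Bb where "Bb = 1 + A + B"
  have Bb1: "Bb \<ge> 1" unfolding Bb_def using A0 B0 by simp
  define C3 where "C3 = 2*K*Bb^(m0+3)"
  have C30: "C3 > 0" unfolding C3_def using K0 Bb1 by simp
  define Q where "Q = sqrt (C/d) * C3"
  have Q0: "Q > 0" unfolding Q_def using C0 d0 C30 by simp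
  define T0 where "T0 = 2*Q*e powr (9/2)/e"
  show ?thesis
  proof (rule exI[of _ "2*T0"], intro allI impI)
    fix n k :: nat assume n0: "n > 0" and k4: "k \<ge> 4"
    define S where "S = rec_seqs (int a) (int b) 1 k (int n)"
    have Seq: "rec_seqs (int a) (int b) (int c) k (int n) = S" unfolding S_def using assms(1) by simp
    show "real (card (rec_seqs (int a) (int b) (int c) k (int n)))
             \<le> (real_of_int \<lceil>2*T0 * real n / \<eta> powr (3 * real k / 2)\<rceil>) ^ 2"
    proof (cases "finite S")
      case False
      then show ?thesis unfolding Seq by simp
    next
      case fin: True
      define m where "m = k - 3"
      define R where "R = Q * real n / e powr (3 * real m / 2)"
      have R0: "R \<ge> 0" unfolding R_def using Q0 by simp
      have key: "\<bar>real n - e * real_of_int (xs!(m+1))\<bar> \<le> R \<and> \<bar>real_of_int (xs!(m+1)) - e * real_of_int (xs!m)\<bar> \<le> R"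
        if xsS: "xs \<in> S" for xs
      proof -
        define x where "x i = real_of_int (xs!i)" for i
        have xsp: "length xs = k" "\<And>i. i < k \<Longrightarrow> xs!i > 0"
          "\<And>i. i + 3 < k \<Longrightarrow> xs ! (i+3) = int a * xs ! (i+2) + int b * xs ! (i+1) + 1 * xs ! i"
          "xs ! (k-1) = int n" using xsS unfolding S_def rec_seqs_def by auto
        have recx: "x (i+3) = A * x (i+2) + B * x (i+1) + x i" if "i+3 < k" for i
          using xsp(3)[OF that] unfolding x_def A_def B_def by simp
        have posx: "x i > 0" if "i < k" for i using xsp(2)[OF that] unfolding x_def by simp
        have mk: "m + 2 < k" "m+2 = k-1" unfolding m_def using k4 by auto
        have xn: "x (m+2) = real n" using xsp(4) mk unfolding x_def by simp
        define u where "u = x (m+1) - e * x m"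
        define v where "v = real n - e * x (m+1)"
        define F where "F = Ff A e (x m) (x (m+1)) (x (m+2))"
        define L where "L = Lf B e (x m) (x (m+1)) (x (m+2))"
        have FQ: "F = Qf (e-A) (1/e) u v" unfolding F_def Ff_def u_def v_def xn ..
        have LL: "L = x m + l2 * x (m+1) + e * real n" unfolding L_def Lf_def l2_def xn ..
        have FB: "F * e^(3*m) \<le> C * L^2" unfolding F_def L_def C_def
          by (rule seq_bound[OF e1 B0 rel recx posx mk(1)])
        have xm0: "x m > 0" "x (m+1) > 0" using posx mk by auto
        have L0: "L \<ge> 0" unfolding LL using xm0 l20 e0 n0 by simp
        have Fu: "d*u^2 \<le> F" and Fv: "d*v^2 \<le> F" unfolding FQ using hQ1 hQ2 by auto
        have LB: "L \<le> C3 * real n"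
        proof (cases "m0 \<le> m")
          case True
          have "e^m0 \<le> e^(3*m)" using True e1 by (intro power_increasing) auto
          then have E: "16*K^2*C/d < e^(3*m)" using m0 by linarith
          have bu: "4*K*\<bar>u\<bar> \<le> L" by (rule large_bound[OF d0 C0 K0 E Fu FB L0])
          have bv: "4*K*\<bar>v\<bar> \<le> L" by (rule large_bound[OF d0 C0 K0 E Fv FB L0])
          have bu': "\<bar>u\<bar> \<le> L/(4*K)" using bu K0 by (simp add: field_simps)
          have bv': "\<bar>v\<bar> \<le> L/(4*K)" using bv K0 by (simp add: field_simps)
          have q1: "x (m+1) \<le> real n + L/(4*K)"
          proof -
            have "e * x (m+1) \<le> real n + L/(4*K)" using bv' unfolding v_def by linarith
            moreover have "x (m+1) \<le> e * x (m+1)" using xm0 e1 by simp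
            ultimately show ?thesis by linarith
          qed
          have q0: "x m \<le> real n + L/(2*K)"
          proof -
            have "e * x m \<le> x (m+1) + L/(4*K)" using bu' unfolding u_def by linarith
            moreover have "x m \<le> e * x m" using xm0 e1 by simp
            moreover have "L/(4*K) + L/(4*K) = L/(2*K)" using K0 by (simp add: field_simps)
            ultimately show ?thesis using q1 by linarith
          qed
          have h4: "L/(4*K) \<le> L/(2*K)" using L0 K0 by (simp add: frac_le)
          define P where "P = real n + L/(2*K)"
          have P1: "x (m+1) \<le> P" "x m \<le> P" "real n \<le> P" unfolding P_def using q1 q0 h4 L0 K0 by auto
          have "L \<le> P + l2 * P + e * P" unfolding LL
            using P1 mult_left_mono[OF P1(1) l20] mult_left_mono[OF P1(3), of e] e0 by linarith
          also have "\<dots> = K * P" unfolding K_def by (simp add: algebra_simps)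
          also have "\<dots> = K * real n + L/2" unfolding P_def using K0 by (simp add: field_simps)
          finally have "L \<le> 2*K*real n" by linarith
          also have "\<dots> \<le> C3 * real n" unfolding C3_def
          proof -
            have "1 \<le> Bb^(m0+3)" using Bb1 by simp
            then have "2*K*1 \<le> 2*K*Bb^(m0+3)" using K0 by (intro mult_left_mono) auto
            then show "2*K*real n \<le> 2*K*Bb^(m0+3) * real n" by (intro mult_right_mono) auto
          qed
          finally show ?thesis .
        next
          case False
          define P where "P = real n * Bb^(m0+3)"
          have xb: "x i \<le> P" if "i < k" for i
          proof -
            have "xs!i \<le> int n * (1 + int a + int b)^i"
              using small_case[of "int a" "int b" xs k "int n" i] xsS fin k4 that unfolding S_def by simp
            then have "x i \<le> real n * Bb^i" unfolding x_def Bb_def A_def B_def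
              by (metis (mono_tags) of_int_le_iff of_int_of_nat_eq of_int_mult of_int_power of_int_add of_int_1)
            also have "\<dots> \<le> P" unfolding P_def using Bb1 that False k4 unfolding m_def
              by (intro mult_left_mono power_increasing) auto
            finally show ?thesis .
          qed
          have P1: "x (m+1) \<le> P" "x m \<le> P" using xb mk by auto
          have "1 \<le> Bb^(m0+3)" using Bb1 by simp
          then have P2: "real n \<le> P" unfolding P_def using mult_left_mono[of 1 "Bb^(m0+3)" "real n"] by simp
          have "L \<le> P + l2 * P + e * P" unfolding LL
            using P1 mult_left_mono[OF P1(1) l20] mult_left_mono[OF P2, of e] e0 by linarith
          also have "\<dots> = K * P" unfolding K_def by (simp add: algebra_simps)
          also have "\<dots> \<le> C3 * real n" unfolding P_def C3_def using K0 Bb1 by (simp add: algebra_simps)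
          finally show ?thesis .
        qed
        have E0: "e^(3*m) > 0" using e0 by simp
        have RR: "R^2 = C * (C3 * real n)^2 / (d * e^(3*m))"
        proof -
          have "(e powr (3 * real m / 2))^2 = e powr (real 2 * (3 * real m / 2))" using e0 by (simp add: powr_power)
          also have "\<dots> = e powr (real (3*m))" by simp
          also have "\<dots> = e^(3*m)" using e0 by (rule powr_realpow)
          finally have pw: "(e powr (3 * real m / 2))^2 = e^(3*m)" .
          have "R^2 = Q^2 * (real n)^2 / (e powr (3 * real m / 2))^2" unfolding R_def by (simp add: power_divide power_mult_distrib)
          also have "\<dots> = (C/d) * C3^2 * (real n)^2 / e^(3*m)" unfolding pw Q_def using C0 d0
            by (simp add: power_mult_distrib)
          finally show ?thesis by (simp add: power_mult_distrib field_simps)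
        qed
        have ybound: "\<bar>y\<bar> \<le> R" if dy: "d*y^2 \<le> F" for y
        proof -
          have "d*y^2 * e^(3*m) \<le> F * e^(3*m)" using dy E0 by (simp add: mult_right_mono)
          also have "\<dots> \<le> C * L^2" by (rule FB)
          also have "\<dots> \<le> C * (C3 * real n)^2" using LB L0 C0 by (simp add: power_mono mult_left_mono)
          finally have "y^2 * (d * e^(3*m)) \<le> C * (C3 * real n)^2" by (simp add: mult_ac)
          then have "y^2 \<le> R^2" unfolding RR using d0 E0 by (simp add: pos_le_divide_eq)
          then show ?thesis using R0 by (simp add: abs_le_square_iff[symmetric] abs_of_nonneg)
        qed
        have "\<bar>v\<bar> \<le> R" "\<bar>u\<bar> \<le> R" using ybound Fu Fv by auto
        then show ?thesis unfolding u_def v_def x_def by simp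
      qed
      have "card S = card ((\<lambda>xs. (xs!(k-3), xs!(k-2))) ` S)"
        using inj_last2[of k "int a" "int b" "int n"] k4 unfolding S_def by (simp add: card_image)
      also have "\<dots> \<le> (nat \<lfloor>2*R/e\<rfloor> + 1)^2"
      proof (rule card_pairs[OF e0 R0, of _ "real n"])
        fix u v assume "(u, v) \<in> (\<lambda>xs. (xs!(k-3), xs!(k-2))) ` S"
        then obtain xs where xs0: "xs \<in> S" "u = xs!(k-3)" "v = xs!(k-2)" by blast
        have "k-2 = m+1" "k-3 = m" unfolding m_def using k4 by auto
        then have xs: "xs \<in> S" "u = xs!m" "v = xs!(m+1)" using xs0 by simp_all
        show "\<bar>real n - e * real_of_int v\<bar> \<le> R \<and> \<bar>real_of_int v - e * real_of_int u\<bar> \<le> R"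
          using key[OF xs(1)] xs by simp
      qed
      finally have c1: "real (card S) \<le> real ((nat \<lfloor>2*R/e\<rfloor> + 1)^2)" by linarith
      have w: "2*R/e = T0 * real n / e powr (3 * real k / 2)"
      proof -
        have mk: "3 * real m / 2 = 3 * real k / 2 - 9/2" unfolding m_def using k4 by (simp add: of_nat_diff)
        have "e powr (3 * real m / 2) = e powr (3 * real k / 2) / e powr (9/2)" unfolding mk by (rule powr_diff)
        then show ?thesis unfolding R_def T0_def using e0 by (simp add: field_simps)
      qed
      have wpos: "2*R/e > 0" unfolding w unfolding T0_def using Q0 e0 n0 by simp
      have "real ((nat \<lfloor>2*R/e\<rfloor> + 1)^2) \<le> (real_of_int \<lceil>2*(2*R/e)\<rceil>)^2"
        by (rule final_arith[OF wpos])
      also have "2*(2*R/e) = 2*T0 * real n / \<eta> powr (3 * real k / 2)" by (subst w) (simp add: e_def)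
      finally show ?thesis using c1 unfolding Seq by linarith
    qed
  qed
qed

end
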